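(* Let $d,N,L\in\mathbb{N}$ with $d+2<N$, and let $W^{(0)}\in\mathbb{R}^{N\times d}$, $W^{(\ell)}\in\mathbb{R}^{N\times N}$ ($1\le\ell\le L-1$) and $b^{(0)},\dots,b^{(L-1)}\in\mathbb{R}^N$ be fixed. Let $\mathscr{D}=\{(D^{(L-1)}(x),\dots,D^{(0)}(x)):x\in\mathbb{R}^d\}$. Then $|\mathscr{D}|\le\left(\frac{eN}{d+1}\right)^{L(d+1)}$.
   Context: For $v\in\mathbb{R}^N$, $\Delta(v)$ is the $N\times N$ diagonal matrix with diagonal entries $\mathbb{1}_{v_i>0}$. For $x\in\mathbb{R}^d$ set $x^{(0)}=x$ and recursively $D^{(\ell)}(x)=\Delta(W^{(\ell)}x^{(\ell)}+b^{(\ell)})$, $x^{(\ell+1)}=\mathrm{ReLU}(W^{(\ell)}x^{(\ell)}+b^{(\ell)})$ for $0\le\ell<L$, where $\mathrm{ReLU}(t)=\max\{0,t\}$ componentwise. *)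

theory Defs
  imports Complex_Main
begin

text \<open>Vectors in R^k are functions nat => real (entries with index >= k are 0 / ignored);
  matrices are functions nat => nat => real (row, column). The weights of the network are
  W :: nat => nat => nat => real (layer, row, column), biases b :: nat => nat => real
  (layer, row).\<close>

definition Delta :: "nat \<Rightarrow> (nat \<Rightarrow> real) \<Rightarrow> nat \<Rightarrow> nat \<Rightarrow> real" where
  "Delta N v = (\<lambda>i j. if i = j \<and> i < N \<and> v i > 0 then 1 else 0)"

definition in_dim :: "nat \<Rightarrow> nat \<Rightarrow> nat \<Rightarrow> nat" where
  "in_dim d N l = (if l = 0 then d else N)"

definition preact :: "nat \<Rightarrow> nat \<Rightarrow> (nat \<Rightarrow> nat \<Rightarrow> nat \<Rightarrow> real) \<Rightarrow> (nat \<Rightarrow> nat \<Rightarrow> real)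
    \<Rightarrow> nat \<Rightarrow> (nat \<Rightarrow> real) \<Rightarrow> nat \<Rightarrow> real" where
  "preact d N W b l y = (\<lambda>i. if i < N then (\<Sum>j < in_dim d N l. W l i j * y j) + b l i else 0)"

fun hidden :: "nat \<Rightarrow> nat \<Rightarrow> (nat \<Rightarrow> nat \<Rightarrow> nat \<Rightarrow> real) \<Rightarrow> (nat \<Rightarrow> nat \<Rightarrow> real)
    \<Rightarrow> (nat \<Rightarrow> real) \<Rightarrow> nat \<Rightarrow> nat \<Rightarrow> real" where
  "hidden d N W b x 0 = x"
| "hidden d N W b x (Suc l) = (\<lambda>i. max 0 (preact d N W b l (hidden d N W b x l) i))"

definition Dpat :: "nat \<Rightarrow> nat \<Rightarrow> (nat \<Rightarrow> nat \<Rightarrow> nat \<Rightarrow> real) \<Rightarrow> (nat \<Rightarrow> nat \<Rightarrow> real)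
    \<Rightarrow> (nat \<Rightarrow> real) \<Rightarrow> nat \<Rightarrow> nat \<Rightarrow> nat \<Rightarrow> real" where
  "Dpat d N W b x l = Delta N (preact d N W b l (hidden d N W b x l))"

definition patterns :: "nat \<Rightarrow> nat \<Rightarrow> nat \<Rightarrow> (nat \<Rightarrow> nat \<Rightarrow> nat \<Rightarrow> real) \<Rightarrow> (nat \<Rightarrow> nat \<Rightarrow> real)
    \<Rightarrow> (nat \<Rightarrow> nat \<Rightarrow> real) list set" where
  "patterns d N L W b =
     {map (Dpat d N W b x) (rev [0..<L]) | x. \<forall>j\<ge>d. x j = 0}"

end

theory Submission imports Defs begin

definition shatters :: "'a set set \<Rightarrow> 'a set \<Rightarrow> bool" where
  "shatters F S = (\<forall>T\<subseteq>S. \<exists>A\<in>F. A \<inter> S = T)"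

lemma pajor:
  assumes "finite X" "F \<subseteq> Pow X"
  shows "card F \<le> card {S. S \<subseteq> X \<and> shatters F S}"
  using assms
proof (induction X arbitrary: F rule: finite_induct)
  case empty
  show ?case
  proof (cases "F = {}")
    case True then show ?thesis by simp
  next
    case False
    with empty have F: "F = {{}}" by auto
    have "{S. S \<subseteq> {} \<and> shatters F S} = {{}}" by (auto simp: F shatters_def)
    then show ?thesis using F by simp
  qed
next
  case (insert x X)
  define F1 where "F1 = (\<lambda>A. A - {x}) ` F"
  define F2 where "F2 = {A. A \<subseteq> X \<and> A \<in> F \<and> insert x A \<in> F}"
  define Fa where "Fa = {A\<in>F. x \<notin> A}"
  define Fb where "Fb = {A\<in>F. x \<in> A}"
  define G where "G = (\<lambda>A. A - {x}) ` Fb"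
  have finF: "finite F" by (rule finite_subset[OF insert.prems]) (simp add: insert.hyps(1))
  have fa: "finite Fa" "finite Fb" "finite G" using finF by (auto simp: Fa_def Fb_def G_def)
  have "F = Fa \<union> Fb" "Fa \<inter> Fb = {}" by (auto simp: Fa_def Fb_def)
  hence cF: "card F = card Fa + card Fb" using fa by (simp add: card_Un_disjoint)
  have "inj_on (\<lambda>A. A - {x}) Fb" unfolding inj_on_def Fb_def by blast
  hence cG: "card G = card Fb" by (simp add: G_def card_image)
  have F1eq: "F1 = Fa \<union> G"
  proof
    show "F1 \<subseteq> Fa \<union> G"
    proof
      fix A assume "A \<in> F1"
      then obtain B where B: "B \<in> F" "A = B - {x}" by (auto simp: F1_def)
      show "A \<in> Fa \<union> G"
      proof (cases "x \<in> B")
        case True then show ?thesis using B by (auto simp: G_def Fb_def)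
      next
        case False then show ?thesis using B by (auto simp: Fa_def)
      qed
    qed
  next
    show "Fa \<union> G \<subseteq> F1"
    proof
      fix A assume "A \<in> Fa \<union> G"
      then show "A \<in> F1"
      proof
        assume "A \<in> Fa" then have "A \<in> F" "A = A - {x}" by (auto simp: Fa_def)
        then show ?thesis unfolding F1_def by blast
      next
        assume "A \<in> G" then show ?thesis by (auto simp: G_def F1_def Fb_def)
      qed
    qed
  qed
  have F2eq: "F2 = Fa \<inter> G"
  proof
    show "F2 \<subseteq> Fa \<inter> G"
    proof
      fix A assume A: "A \<in> F2"
      hence "x \<notin> A" using insert.hyps(2) by (auto simp: F2_def)
      moreover have "insert x A \<in> Fb" using A by (auto simp: F2_def Fb_def)
      ultimately show "A \<in> Fa \<inter> G" using A unfolding G_def Fa_def F2_def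
        by (auto intro!: image_eqI[of _ _ "insert x A"])
    qed
  next
    show "Fa \<inter> G \<subseteq> F2"
    proof
      fix A assume A: "A \<in> Fa \<inter> G"
      then obtain B where B: "B \<in> F" "x \<in> B" "A = B - {x}" by (auto simp: G_def Fb_def)
      have "insert x A = B" using B by auto
      moreover have "A \<subseteq> X" using B insert.prems by auto
      ultimately show "A \<in> F2" using A B(1) unfolding F2_def Fa_def by auto
    qed
  qed
  have "card (Fa \<union> G) + card (Fa \<inter> G) = card Fa + card G"
    using card_Un_Int[OF fa(1) fa(3)] by linarith
  hence cF12: "card F = card F1 + card F2" unfolding F1eq F2eq using cF cG by linarith
  define Sh where "Sh = (\<lambda>H. {S. S \<subseteq> X \<and> shatters H S})"
  have F1s: "F1 \<subseteq> Pow X" unfolding F1_def using insert.prems by blast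
  have F2s: "F2 \<subseteq> Pow X" unfolding F2_def by blast
  have IH1: "card F1 \<le> card (Sh F1)" using insert.IH[OF F1s] unfolding Sh_def .
  have IH2: "card F2 \<le> card (Sh F2)" using insert.IH[OF F2s] unfolding Sh_def .
  have sub1: "Sh F1 \<subseteq> {S. S \<subseteq> insert x X \<and> shatters F S}"
  proof
    fix S assume S: "S \<in> Sh F1"
    have xS: "x \<notin> S" using S insert.hyps(2) by (auto simp: Sh_def)
    have "shatters F S"
      unfolding shatters_def
    proof (intro allI impI)
      fix T assume "T \<subseteq> S"
      moreover have "shatters F1 S" using S by (simp add: Sh_def)
      ultimately obtain A where A: "A \<in> F1" "A \<inter> S = T" unfolding shatters_def by blast
      from A(1) obtain B where B: "B \<in> F" "A = B - {x}" unfolding F1_def by blast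
      have "B \<inter> S = T" using A(2) B(2) xS by blast
      then show "\<exists>A\<in>F. A \<inter> S = T" using B(1) by blast
    qed
    then show "S \<in> {S. S \<subseteq> insert x X \<and> shatters F S}" using S by (auto simp: Sh_def)
  qed
  have sub2: "insert x ` Sh F2 \<subseteq> {S. S \<subseteq> insert x X \<and> shatters F S}"
  proof
    fix S' assume "S' \<in> insert x ` Sh F2"
    then obtain S where S: "S \<in> Sh F2" "S' = insert x S" by blast
    have xS: "x \<notin> S" using S insert.hyps(2) by (auto simp: Sh_def)
    have "shatters F (insert x S)"
      unfolding shatters_def
    proof (intro allI impI)
      fix T assume T: "T \<subseteq> insert x S"
      have "T - {x} \<subseteq> S" using T by auto
      moreover have "shatters F2 S" using S by (simp add: Sh_def)
      ultimately obtain A where A: "A \<in> F2" "A \<inter> S = T - {x}" unfolding shatters_def by blast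
      have xA: "x \<notin> A" using A insert.hyps(2) by (auto simp: F2_def)
      show "\<exists>A\<in>F. A \<inter> insert x S = T"
      proof (cases "x \<in> T")
        case True
        then show ?thesis using A xA by (intro bexI[of _ "insert x A"]) (auto simp: F2_def)
      next
        case False
        then show ?thesis using A xA by (intro bexI[of _ A]) (auto simp: F2_def)
      qed
    qed
    then show "S' \<in> {S. S \<subseteq> insert x X \<and> shatters F S}" using S by (auto simp: Sh_def)
  qed
  have fin: "finite {S. S \<subseteq> insert x X \<and> shatters F S}"
    by (rule finite_subset[of _ "Pow (insert x X)"]) (auto simp: insert.hyps(1))
  have disj: "Sh F1 \<inter> insert x ` Sh F2 = {}" using insert.hyps(2) by (auto simp: Sh_def)
  have inj: "inj_on (insert x) (Sh F2)"
  proof (rule inj_onI)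
    fix a c assume "a \<in> Sh F2" "c \<in> Sh F2" "insert x a = insert x c"
    moreover have "x \<notin> a" "x \<notin> c" using calculation insert.hyps(2) by (auto simp: Sh_def)
    ultimately show "a = c" by (simp add: insert_ident)
  qed
  have "card F \<le> card (Sh F1) + card (insert x ` Sh F2)"
    using cF12 IH1 IH2 inj by (simp add: card_image)
  also have "\<dots> = card (Sh F1 \<union> insert x ` Sh F2)"
    using disj finite_subset[OF sub1 fin] finite_subset[OF sub2 fin] by (intro card_Un_disjoint[symmetric])
  also have "\<dots> \<le> card {S. S \<subseteq> insert x X \<and> shatters F S}"
    using sub1 sub2 fin by (intro card_mono) auto
  finally show ?case .
qed

lemma lin_dep:
  fixes M :: "nat \<Rightarrow> nat \<Rightarrow> real"
  assumes "finite S" "n < card S"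
  shows "\<exists>lam. (\<exists>i\<in>S. lam i \<noteq> 0) \<and> (\<forall>r<n. (\<Sum>i\<in>S. lam i * M r i) = 0)"
  using assms
proof (induction n arbitrary: S M)
  case 0
  then obtain i where "i \<in> S" by fastforce
  then show ?case by (intro exI[of _ "\<lambda>_. 1"]) auto
next
  case (Suc n)
  show ?case
  proof (cases "\<forall>i\<in>S. M n i = 0")
    case True
    from Suc.IH[of S M] Suc.prems obtain lam where
      l: "\<exists>i\<in>S. lam i \<noteq> 0" "\<forall>r<n. (\<Sum>i\<in>S. lam i * M r i) = 0" by auto
    have "\<forall>r<Suc n. (\<Sum>i\<in>S. lam i * M r i) = 0"
    proof (intro allI impI)
      fix r assume "r < Suc n"
      then consider "r < n" | "r = n" by linarith
      then show "(\<Sum>i\<in>S. lam i * M r i) = 0" using l True by cases auto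
    qed
    then show ?thesis using l by blast
  next
    case False
    then obtain i0 where i0: "i0 \<in> S" "M n i0 \<noteq> 0" by blast
    define S' where "S' = S - {i0}"
    define M' where "M' = (\<lambda>r i. M r i - M r i0 * M n i / M n i0)"
    have fS': "finite S'" using Suc.prems by (simp add: S'_def)
    have cS': "n < card S'" using Suc.prems i0 by (simp add: S'_def)
    from Suc.IH[OF fS' cS', of M'] obtain mu where
      m: "\<exists>i\<in>S'. mu i \<noteq> 0" "\<forall>r<n. (\<Sum>i\<in>S'. mu i * M' r i) = 0" by auto
    define lam where "lam = mu(i0 := - (\<Sum>i\<in>S'. mu i * M n i) / M n i0)"
    have split: "(\<Sum>i\<in>S. lam i * M r i) = lam i0 * M r i0 + (\<Sum>i\<in>S'. mu i * M r i)" for r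
    proof -
      have "(\<Sum>i\<in>S. lam i * M r i) = lam i0 * M r i0 + (\<Sum>i\<in>S'. lam i * M r i)"
        using Suc.prems i0 by (simp add: S'_def sum.remove)
      also have "(\<Sum>i\<in>S'. lam i * M r i) = (\<Sum>i\<in>S'. mu i * M r i)"
        by (rule sum.cong) (auto simp: lam_def S'_def)
      finally show ?thesis .
    qed
    have "\<forall>r<Suc n. (\<Sum>i\<in>S. lam i * M r i) = 0"
    proof (intro allI impI)
      fix r assume "r < Suc n"
      then consider "r < n" | "r = n" by linarith
      then show "(\<Sum>i\<in>S. lam i * M r i) = 0"
      proof cases
        case 1
        have "0 = (\<Sum>i\<in>S'. mu i * M' r i)" using m 1 by auto
        also have "\<dots> = (\<Sum>i\<in>S'. mu i * M r i) - M r i0 / M n i0 * (\<Sum>i\<in>S'. mu i * M n i)"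
          by (simp add: M'_def sum_distrib_left sum_subtractf algebra_simps)
        also have "\<dots> = (\<Sum>i\<in>S. lam i * M r i)"
          using i0 unfolding split by (simp add: lam_def field_simps)
        finally show ?thesis by simp
      next
        case 2
        then show ?thesis using i0 unfolding split by (simp add: lam_def field_simps)
      qed
    qed
    moreover have "\<exists>i\<in>S. lam i \<noteq> 0" using m by (auto simp: lam_def S'_def)
    ultimately show ?thesis by blast
  qed
qed


lemma card_small_subsets:
  assumes "finite A"
  shows "card {S. S \<subseteq> A \<and> card S \<le> k} = (\<Sum>i\<le>k. card A choose i)"
proof -
  have "{S. S \<subseteq> A \<and> card S \<le> k} = (\<Union>i\<in>{..k}. {S. S \<subseteq> A \<and> card S = i})" by auto
  hence "card {S. S \<subseteq> A \<and> card S \<le> k} = (\<Sum>i\<le>k. card {S. S \<subseteq> A \<and> card S = i})"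
    using assms by (simp, intro card_UN_disjoint) (auto intro: finite_subset[of _ "Pow A"])
  also have "\<dots> = (\<Sum>i\<le>k. card A choose i)" using assms by (simp add: n_subsets)
  finally show ?thesis .
qed

lemma sign_patterns:
  fixes A :: "nat \<Rightarrow> nat \<Rightarrow> real" and c :: "nat \<Rightarrow> real" and X :: "(nat \<Rightarrow> real) set" and N d :: nat
  defines "P \<equiv> (\<lambda>x. {i. i < N \<and> (\<Sum>k<d. A i k * x k) + c i > 0}) ` X"
  shows "finite P \<and> card P \<le> (\<Sum>i\<le>d+1. N choose i)"
proof -
  have PP: "P \<subseteq> Pow {..<N}" by (auto simp: P_def)
  hence finP: "finite P" by (rule finite_subset) simp
  have key: "card S \<le> d + 1" if S: "S \<subseteq> {..<N}" "shatters P S" for S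
  proof (rule ccontr)
    assume "\<not> card S \<le> d + 1"
    hence cS: "d + 1 < card S" by simp
    have fS: "finite S" using S finite_subset by blast
    define M where "M = (\<lambda>r i. if r < d then A i r else c i)"
    from lin_dep[OF fS cS, of M] obtain lam0 where
      l0: "\<exists>i\<in>S. lam0 i \<noteq> 0" "\<forall>r<d+1. (\<Sum>i\<in>S. lam0 i * M r i) = 0" by blast
    obtain lam where l: "\<exists>i\<in>S. lam i > 0" "\<forall>r<d+1. (\<Sum>i\<in>S. lam i * M r i) = 0"
    proof (cases "\<exists>i\<in>S. lam0 i > 0")
      case True then show ?thesis using that l0 by blast
    next
      case False
      then obtain i where "i \<in> S" "- lam0 i > 0" using l0 by force
      moreover have "\<forall>r<d+1. (\<Sum>i\<in>S. (- lam0 i) * M r i) = 0"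
        using l0 by (simp add: sum_negf)
      ultimately show ?thesis using that[of "\<lambda>i. - lam0 i"] by blast
    qed
    define T where "T = {i\<in>S. lam i > 0}"
    have "T \<subseteq> S" by (auto simp: T_def)
    then obtain B where B: "B \<in> P" "B \<inter> S = T" using S(2) unfolding shatters_def by blast
    then obtain x where x: "x \<in> X" "{i. i < N \<and> (\<Sum>k<d. A i k * x k) + c i > 0} \<inter> S = T"
      unfolding P_def by blast
    define f where "f = (\<lambda>i. (\<Sum>k<d. A i k * x k) + c i)"
    have memT: "i \<in> T \<longleftrightarrow> f i > 0" if "i \<in> S" for i
      proof -
      have "i < N" using that S(1) by auto
      then show ?thesis using x(2) that unfolding f_def by blast
    qed
    have "(\<Sum>i\<in>S. lam i * f i) = (\<Sum>k<d. x k * (\<Sum>i\<in>S. lam i * M k i)) + (\<Sum>i\<in>S. lam i * M d i)"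
    proof -
      have "(\<Sum>i\<in>S. lam i * f i) = (\<Sum>i\<in>S. (\<Sum>k<d. x k * (lam i * A i k)) + lam i * c i)"
        unfolding f_def by (rule sum.cong) (simp_all add: sum_distrib_left distrib_left mult_ac)
      also have "\<dots> = (\<Sum>i\<in>S. \<Sum>k<d. x k * (lam i * A i k)) + (\<Sum>i\<in>S. lam i * c i)"
        by (rule sum.distrib)
      also have "(\<Sum>i\<in>S. \<Sum>k<d. x k * (lam i * A i k)) = (\<Sum>k<d. \<Sum>i\<in>S. x k * (lam i * A i k))"
        by (rule sum.swap)
      also have "\<dots> = (\<Sum>k<d. x k * (\<Sum>i\<in>S. lam i * M k i))"
        by (rule sum.cong) (simp_all add: M_def sum_distrib_left)
      also have "(\<Sum>i\<in>S. lam i * c i) = (\<Sum>i\<in>S. lam i * M d i)"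
        by (simp add: M_def)
      finally show ?thesis .
    qed
    also have "\<dots> = 0" using l(2) by simp
    finally have z: "(\<Sum>i\<in>S. lam i * f i) = 0" .
    obtain i0 where i0: "i0 \<in> S" "lam i0 > 0" using l(1) by blast
    have "0 < (\<Sum>i\<in>S. lam i * f i)"
    proof (rule sum_pos2[OF fS i0(1)])
      show "0 < lam i0 * f i0" using i0 memT[OF i0(1)] by (simp add: T_def)
      show "0 \<le> lam i * f i" if iS: "i \<in> S" for i
      proof -
        show "0 \<le> lam i * f i"
        proof (cases "lam i > 0")
          case True then show ?thesis using memT[OF iS] iS by (simp add: T_def)
        next
          case False
          then have "f i \<le> 0" using memT[OF iS] iS by (auto simp: T_def)
          then show ?thesis using False by (simp add: mult_nonpos_nonpos)
        qed
      qed
    qed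
    then show False using z by simp
  qed
  have "card P \<le> card {S. S \<subseteq> {..<N} \<and> shatters P S}" by (rule pajor[OF _ PP]) simp
  also have "\<dots> \<le> card {S. S \<subseteq> {..<N} \<and> card S \<le> d + 1}"
  proof (rule card_mono)
    show "finite {S. S \<subseteq> {..<N} \<and> card S \<le> d + 1}"
      by (rule finite_subset[of _ "Pow {..<N}"]) auto
    show "{S. S \<subseteq> {..<N} \<and> shatters P S} \<subseteq> {S. S \<subseteq> {..<N} \<and> card S \<le> d + 1}"
      using key by blast
  qed
  also have "\<dots> = (\<Sum>i\<le>d+1. N choose i)" by (simp add: card_small_subsets)
  finally show ?thesis using finP by simp
qed

lemma binom_bound:
  assumes k1: "1 \<le> k" and kN: "k \<le> N"
  shows "real (\<Sum>i\<le>k. N choose i) \<le> (exp 1 * real N / real k) ^ k"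
proof -
  define t where "t = real k / real N"
  have Npos: "real N > 0" using k1 kN by simp
  have t0: "0 < t" using k1 kN by (simp add: t_def)
  have t1: "t \<le> 1" using kN Npos by (simp add: t_def)
  have "t ^ k * real (\<Sum>i\<le>k. N choose i) = (\<Sum>i\<le>k. real (N choose i) * t ^ k)"
    by (simp add: sum_distrib_left mult.commute)
  also have "\<dots> \<le> (\<Sum>i\<le>k. real (N choose i) * t ^ i)"
    by (intro sum_mono mult_left_mono power_decreasing) (use t0 t1 in auto)
  also have "\<dots> \<le> (\<Sum>i\<le>N. real (N choose i) * t ^ i)"
    by (intro sum_mono2) (use t0 kN in auto)
  also have "\<dots> = (t + 1) ^ N"
    by (simp add: binomial_ring)
  also have "\<dots> \<le> exp t ^ N"
    using exp_ge_add_one_self[of t] t0 by (intro power_mono) (auto simp: add.commute)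
  also have "\<dots> = exp 1 ^ k"
    using Npos by (simp add: exp_of_nat_mult[symmetric] t_def flip: exp_of_nat2_mult)
  finally have "t ^ k * real (\<Sum>i\<le>k. N choose i) \<le> exp 1 ^ k" .
  hence "real (\<Sum>i\<le>k. N choose i) \<le> exp 1 ^ k / t ^ k"
    using t0 by (simp add: field_simps)
  also have "\<dots> = (exp 1 * real N / real k) ^ k"
    using t0 k1 Npos by (simp add: t_def power_divide field_simps)
  finally show ?thesis .
qed


lemma preact_affine:
  assumes "\<forall>j<in_dim d N l. y j = (\<Sum>k<d. H j k * x k) + h j" "i < N"
  shows "preact d N W b l y i = (\<Sum>k<d. (\<Sum>j<in_dim d N l. W l i j * H j k) * x k)
           + ((\<Sum>j<in_dim d N l. W l i j * h j) + b l i)"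
proof -
  have "preact d N W b l y i = (\<Sum>j<in_dim d N l. W l i j * ((\<Sum>k<d. H j k * x k) + h j)) + b l i"
    using assms by (simp add: preact_def)
  also have "\<dots> = (\<Sum>k<d. (\<Sum>j<in_dim d N l. W l i j * H j k) * x k)
           + ((\<Sum>j<in_dim d N l. W l i j * h j) + b l i)"
    by (simp add: distrib_left sum.distrib sum_distrib_left sum_distrib_right mult.assoc
        sum.swap[of _ "{..<in_dim d N l}" "{..<d}"])
  finally show ?thesis .
qed

lemma hidden_affine:
  "\<exists>H h. \<forall>x. (\<forall>j\<ge>d. x j = 0) \<longrightarrow> (\<forall>m<l. Dpat d N W b x m = Dpat d N W b x0 m) \<longrightarrow>
     (\<forall>j<in_dim d N l. hidden d N W b x l j = (\<Sum>k<d. H j k * x k) + h j)"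
proof (induction l)
  case 0
  show ?case
  proof (intro exI[of _ "\<lambda>j k. if j = k then 1 else 0"] exI[of _ "\<lambda>_. 0"] allI impI)
    fix x :: "nat \<Rightarrow> real" and j assume "j < in_dim d N 0"
    then show "hidden d N W b x 0 j = (\<Sum>k<d. (if j = k then 1 else 0) * x k) + 0"
    proof -
      have jd: "j < d" using \<open>j < in_dim d N 0\<close> by (simp add: in_dim_def)
      have "(\<Sum>k<d. (if j = k then 1 else 0) * x k) = (\<Sum>k<d. if j = k then x k else 0)"
        by (rule sum.cong) auto
      also have "\<dots> = x j" using jd by (simp add: sum.delta)
      finally show ?thesis by simp
    qed
  qed
next
  case (Suc l)
  then obtain H h where Hh: "\<forall>x. (\<forall>j\<ge>d. x j = 0) \<longrightarrow> (\<forall>m<l. Dpat d N W b x m = Dpat d N W b x0 m) \<longrightarrow>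
     (\<forall>j<in_dim d N l. hidden d N W b x l j = (\<Sum>k<d. H j k * x k) + h j)" by blast
  define A' where "A' = (\<lambda>i k. \<Sum>j<in_dim d N l. W l i j * H j k)"
  define c' where "c' = (\<lambda>i. (\<Sum>j<in_dim d N l. W l i j * h j) + b l i)"
  define pos where "pos = (\<lambda>i. preact d N W b l (hidden d N W b x0 l) i > 0)"
  show ?case
  proof (intro exI[of _ "\<lambda>i k. if pos i then A' i k else 0"] exI[of _ "\<lambda>i. if pos i then c' i else 0"] allI impI)
    fix x :: "nat \<Rightarrow> real" and j
    assume x: "\<forall>j\<ge>d. x j = 0" and ag: "\<forall>m<Suc l. Dpat d N W b x m = Dpat d N W b x0 m"
      and j: "j < in_dim d N (Suc l)"
    have jN: "j < N" using j by (simp add: in_dim_def)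
    have aff: "\<forall>j<in_dim d N l. hidden d N W b x l j = (\<Sum>k<d. H j k * x k) + h j"
      using Hh x ag by auto
    have pre: "preact d N W b l (hidden d N W b x l) j = (\<Sum>k<d. A' j k * x k) + c' j"
      using preact_affine[OF aff jN] by (simp add: A'_def c'_def)
    have "Dpat d N W b x l j j = Dpat d N W b x0 l j j" using ag by simp
    hence "(preact d N W b l (hidden d N W b x l) j > 0) = pos j"
      using jN by (simp add: Dpat_def Delta_def pos_def split: if_splits)
    then show "hidden d N W b x (Suc l) j =
        (\<Sum>k<d. (if pos j then A' j k else 0) * x k) + (if pos j then c' j else 0)"
      using pre by (auto simp: max_def)
  qed
qed

lemma patterns_Suc:
  "patterns d N (Suc k) W b = (\<Union>p\<in>patterns d N k W b.
     {Dpat d N W b x k # p | x. (\<forall>j\<ge>d. x j = 0) \<and> map (Dpat d N W b x) (rev [0..<k]) = p})"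
  by (auto simp: patterns_def)

lemma layer_bound:
  assumes "p \<in> patterns d N k W b"
  shows "finite {Dpat d N W b x k # p | x. (\<forall>j\<ge>d. x j = 0) \<and> map (Dpat d N W b x) (rev [0..<k]) = p}
    \<and> card {Dpat d N W b x k # p | x. (\<forall>j\<ge>d. x j = 0) \<and> map (Dpat d N W b x) (rev [0..<k]) = p}
       \<le> (\<Sum>i\<le>d+1. N choose i)"
proof -
  obtain x0 where x0: "p = map (Dpat d N W b x0) (rev [0..<k])"
    using assms by (auto simp: patterns_def)
  obtain H h where Hh: "\<forall>x. (\<forall>j\<ge>d. x j = 0) \<longrightarrow> (\<forall>m<k. Dpat d N W b x m = Dpat d N W b x0 m) \<longrightarrow>
     (\<forall>j<in_dim d N k. hidden d N W b x k j = (\<Sum>kk<d. H j kk * x kk) + h j)"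
    using hidden_affine by blast
  define A' where "A' = (\<lambda>i kk. \<Sum>j<in_dim d N k. W k i j * H j kk)"
  define c' where "c' = (\<lambda>i. (\<Sum>j<in_dim d N k. W k i j * h j) + b k i)"
  define X where "X = {x. (\<forall>j\<ge>d. x j = 0) \<and> map (Dpat d N W b x) (rev [0..<k]) = p}"
  define P where "P = (\<lambda>x. {i. i < N \<and> (\<Sum>kk<d. A' i kk * x kk) + c' i > 0}) ` X"
  define g where "g = (\<lambda>S::nat set. (\<lambda>i j. if i = j \<and> i \<in> S then 1 else (0::real)) # p)"
  have sub: "{Dpat d N W b x k # p | x. (\<forall>j\<ge>d. x j = 0) \<and> map (Dpat d N W b x) (rev [0..<k]) = p}
      \<subseteq> g ` P"
  proof
    fix q assume "q \<in> {Dpat d N W b x k # p | x. (\<forall>j\<ge>d. x j = 0) \<and> map (Dpat d N W b x) (rev [0..<k]) = p}"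
    then obtain x where x: "q = Dpat d N W b x k # p" "\<forall>j\<ge>d. x j = 0"
      "map (Dpat d N W b x) (rev [0..<k]) = p" by blast
    have xX: "x \<in> X" using x by (simp add: X_def)
    have "\<forall>m<k. Dpat d N W b x m = Dpat d N W b x0 m"
      using x(3) x0 by (auto simp: map_eq_conv)
    hence aff: "\<forall>j<in_dim d N k. hidden d N W b x k j = (\<Sum>kk<d. H j kk * x kk) + h j"
      using Hh x(2) by blast
    have pre: "preact d N W b k (hidden d N W b x k) i = (\<Sum>kk<d. A' i kk * x kk) + c' i" if "i < N" for i
      using preact_affine[OF aff that] by (simp add: A'_def c'_def)
    have "Dpat d N W b x k = (\<lambda>i j. if i = j \<and> i \<in> {i. i < N \<and> (\<Sum>kk<d. A' i kk * x kk) + c' i > 0} then 1 else 0)"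
      by (rule ext, rule ext) (auto simp: Dpat_def Delta_def pre)
    hence "q = g {i. i < N \<and> (\<Sum>kk<d. A' i kk * x kk) + c' i > 0}" using x(1) by (simp add: g_def)
    moreover have "{i. i < N \<and> (\<Sum>kk<d. A' i kk * x kk) + c' i > 0} \<in> P" using xX by (auto simp: P_def)
    ultimately show "q \<in> g ` P" by blast
  qed
  have a: "finite P \<and> card P \<le> (\<Sum>i\<le>d+1. N choose i)"
    unfolding P_def by (rule sign_patterns)
  have fg: "finite (g ` P)" using a by simp
  have cg: "card (g ` P) \<le> card P" using a by (simp add: card_image_le)
  have f1: "finite {Dpat d N W b x k # p | x. (\<forall>j\<ge>d. x j = 0) \<and> map (Dpat d N W b x) (rev [0..<k]) = p}"
    by (rule finite_subset[OF sub fg])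
  have c1: "card {Dpat d N W b x k # p | x. (\<forall>j\<ge>d. x j = 0) \<and> map (Dpat d N W b x) (rev [0..<k]) = p} \<le> card (g ` P)"
    by (rule card_mono[OF fg sub])
  show ?thesis using f1 c1 cg a by linarith
qed

lemma patterns_bound:
  "finite (patterns d N L W b) \<and> card (patterns d N L W b) \<le> (\<Sum>i\<le>d+1. N choose i) ^ L"
proof (induction L)
  case 0
  have "patterns d N 0 W b = {[]}" by (auto simp: patterns_def intro!: exI[of _ "\<lambda>_. 0"])
  then show ?case by simp
next
  case (Suc k)
  let ?B = "(\<Sum>i\<le>d+1. N choose i)"
  let ?Q = "\<lambda>p. {Dpat d N W b x k # p | x. (\<forall>j\<ge>d. x j = 0) \<and> map (Dpat d N W b x) (rev [0..<k]) = p}"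
  have fin: "finite (patterns d N (Suc k) W b)"
    unfolding patterns_Suc using Suc layer_bound by blast
  have "card (patterns d N (Suc k) W b) \<le> (\<Sum>p\<in>patterns d N k W b. card (?Q p))"
    unfolding patterns_Suc by (rule card_UN_le) (use Suc in blast)
  also have "\<dots> \<le> (\<Sum>p\<in>patterns d N k W b. ?B)"
    by (rule sum_mono) (use layer_bound in blast)
  also have "\<dots> = card (patterns d N k W b) * ?B" by simp
  also have "\<dots> \<le> ?B ^ k * ?B" using Suc by simp
  also have "\<dots> = ?B ^ Suc k" by simp
  finally show ?case using fin by simp
qed

theorem lemma5p7:
  fixes d N L :: nat
    and W :: "nat \<Rightarrow> nat \<Rightarrow> nat \<Rightarrow> real"
    and b :: "nat \<Rightarrow> nat \<Rightarrow> real"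
  assumes "d + 2 < N"
  shows "finite (patterns d N L W b) \<and>
         real (card (patterns d N L W b)) \<le> (exp 1 * real N / real (d + 1)) ^ (L * (d + 1))"
proof -
  let ?B = "(\<Sum>i\<le>d+1. N choose i)"
  have pb: "finite (patterns d N L W b)" "card (patterns d N L W b) \<le> ?B ^ L"
    using patterns_bound by blast+
  have "real (card (patterns d N L W b)) \<le> real (?B ^ L)" using pb(2) by linarith
  also have "\<dots> = real ?B ^ L" by simp
  also have "\<dots> \<le> ((exp 1 * real N / real (d + 1)) ^ (d + 1)) ^ L"
  proof (rule power_mono)
    show "real ?B \<le> (exp 1 * real N / real (d + 1)) ^ (d + 1)"
      using binom_bound[of "d+1" N] assms by simp
  qed (rule of_nat_0_le_iff)
  also have "\<dots> = (exp 1 * real N / real (d + 1)) ^ (L * (d + 1))"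
    by (simp only: power_mult[symmetric] mult.commute)
  finally show ?thesis using pb(1) by simp
qed

end
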